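(* Let $n,k$ be positive integers (with $k$ allowed to depend on $n$) and let $p\in[0,1]$. If $\mathbf{G}\sim\mathcal{G}(n,p,k)$, then asymptotically almost surely $\mathbf{G}$ is $s$-almost-complete for $$s=\max\bigl(2\sqrt{n}(1-p),\;9e^2\log(kn)\bigr).$$
   Context: A graph $G$ "over $k$ blocks of size $n$" has vertex set $V_1\sqcup\dots\sqcup V_k$ with $|V_i|=n$ for every $i$, where $n$ is a power of $2$ with $\log n$ even. Every vertex of a block $V_i$ is identified with a string in $\{0,1\}^{\log n}$, which is written as a pair $(x,y)\in\Sigma\times\Sigma$ with $\Sigma=\{0,1\}^{(\log n)/2}$ ($x$ the first half of the bits, $y$ the second half). $\mathcal{G}(n,p,k)$ is the distribution obtained by sampling a graph on the $kn$ vertices $V_1\sqcup\dots\sqcup V_k$ in which each pair of vertices lying in different blocks is an edge independently with probability $p$, and pairs inside a block are never edges (equivalently, an Erdős–Rényi graph $\mathcal{G}(nk,p)$ intersected with the complete $k$-partite graph with parts $V_1,\dots,V_k$). Given $s>0$, $G$ is $s$-almost-complete if for every $i\neq j\in[k]$ and every $x_i,y_i,x_j\in\Sigma$ there are at most $s$ values $y_j\in\Sigma$ such that the vertex $(x_i,y_i)$ of $V_i$ and the vertex $(x_j,y_j)$ of $V_j$ are not adjacent. "Asymptotically almost surely" means with probability $1-o(1)$ as $n\to\infty$. *)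

theory Defs
  imports "HOL-Probability.Probability"
begin

text \<open>A vertex is a triple (i, x, y): block index i < k and the two halves x, y < r of
  its label, where r = sqrt n = 2^((log n)/2) and the strings in Sigma are identified
  with the numbers 0..r-1.\<close>

type_synonym vertex = "nat \<times> nat \<times> nat"

definition block_vertices :: "nat \<Rightarrow> nat \<Rightarrow> vertex set" where
  "block_vertices r k = {(i, x, y). i < k \<and> x < r \<and> y < r}"

text \<open>Each unordered cross-block pair {u,v} is represented once, as the ordered pair (u,v)
  with the block of u smaller than the block of v.\<close>

definition cross_pairs :: "nat \<Rightarrow> nat \<Rightarrow> (vertex \<times> vertex) set" where
  "cross_pairs r k = {(u, v). u \<in> block_vertices r k \<and> v \<in> block_vertices r k \<and> fst u < fst v}"

definition gnpk :: "nat \<Rightarrow> nat \<Rightarrow> real \<Rightarrow> (vertex \<times> vertex \<Rightarrow> bool) pmf" where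
  "gnpk r k p = Pi_pmf (cross_pairs r k) False (\<lambda>_. bernoulli_pmf p)"

definition adj :: "(vertex \<times> vertex \<Rightarrow> bool) \<Rightarrow> vertex \<Rightarrow> vertex \<Rightarrow> bool" where
  "adj E u v = (if fst u < fst v then E (u, v) else if fst v < fst u then E (v, u) else False)"

definition almost_complete :: "nat \<Rightarrow> nat \<Rightarrow> real \<Rightarrow> (vertex \<times> vertex \<Rightarrow> bool) \<Rightarrow> bool" where
  "almost_complete r k s E =
     (\<forall>i<k. \<forall>j<k. i \<noteq> j \<longrightarrow> (\<forall>xi<r. \<forall>yi<r. \<forall>xj<r.
        real (card {yj. yj < r \<and> \<not> adj E (i, xi, yi) (j, xj, yj)}) \<le> s))"

end

theory Submission
  imports Defs "HOL-Analysis.Harmonic_Numbers"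
begin

lemma prod_if_12:
  assumes "finite A"
  shows "(\<Prod>y\<in>A. (if Q y then 1 else 2::real)) = 2 ^ card {y\<in>A. \<not> Q y}"
  using assms
proof (induction A rule: finite_induct)
  case empty then show ?case by simp
next
  case (insert a A)
  have e: "{y\<in>insert a A. \<not> Q y} = (if Q a then {y\<in>A. \<not> Q y} else insert a {y\<in>A. \<not> Q y})" by auto
  show ?case by (subst e, cases "Q a") (use insert in auto)
qed

lemma finite_cross_pairs: "finite (cross_pairs r k)"
proof -
  have "block_vertices r k \<subseteq> {..<k} \<times> {..<r} \<times> {..<r}" unfolding block_vertices_def by auto
  hence fb: "finite (block_vertices r k)" by (rule finite_subset) auto
  have "cross_pairs r k \<subseteq> block_vertices r k \<times> block_vertices r k" unfolding cross_pairs_def by auto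
  thus ?thesis using fb by (meson finite_SigmaI finite_subset)
qed

lemma tuple_bound:
  assumes p: "0 \<le> p" "p \<le> 1" and ij: "i < k" "j < k" "i \<noteq> j" and xy: "xi < r" "yi < r" "xj < r"
  shows "measure_pmf.prob (gnpk r k p)
           {E. real (card {yj. yj < r \<and> \<not> adj E (i, xi, yi) (j, xj, yj)}) > s}
         \<le> (2 - p) ^ r / 2 powr s"
proof -
  define C where "C = cross_pairs r k"
  define \<pi> where "\<pi> y = (if i < j then ((i,xi,yi),(j,xj,y)) else ((j,xj,y),(i,xi,yi)))" for y
  have adj_eq: "adj E (i,xi,yi) (j,xj,y) = E (\<pi> y)" for E y
    using ij by (auto simp: adj_def \<pi>_def)
  define P where "P = \<pi> ` {..<r}"
  have inj: "inj_on \<pi> {..<r}" by (auto simp: inj_on_def \<pi>_def split: if_splits)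
  have PC: "P \<subseteq> C" using ij xy
    by (auto simp: P_def C_def \<pi>_def cross_pairs_def block_vertices_def)
  have finC: "finite C" unfolding C_def by (rule finite_cross_pairs)
  define f where "f e b = (if e \<in> P then (if b then 1 else 2) else (1::real))" for e b
  define u where "u E = (\<Prod>e\<in>C. f e (E e))" for E
  have u_eq: "u E = 2 ^ card {yj. yj < r \<and> \<not> E (\<pi> yj)}" for E
  proof -
    have "u E = (\<Prod>e\<in>P. f e (E e))"
      unfolding u_def by (rule prod.mono_neutral_right[OF finC PC]) (auto simp: f_def)
    also have "\<dots> = (\<Prod>e\<in>P. (if E e then 1 else 2))" by (rule prod.cong) (auto simp: f_def)
    also have "\<dots> = (\<Prod>y<r. (if E (\<pi> y) then 1 else 2))"
      unfolding P_def by (subst prod.reindex[OF inj]) simp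
    also have "\<dots> = 2 ^ card {y\<in>{..<r}. \<not> E (\<pi> y)}" by (rule prod_if_12) simp
    finally show ?thesis by simp
  qed
  have integ: "integrable (measure_pmf (bernoulli_pmf p)) (g :: bool \<Rightarrow> real)" for g
    by (rule integrable_measure_pmf_finite) (rule finite_subset[of _ UNIV], auto)
  have Eu: "measure_pmf.expectation (gnpk r k p) u = (2 - p) ^ r"
  proof -
    have "measure_pmf.expectation (gnpk r k p) u = (\<Prod>e\<in>C. measure_pmf.expectation (bernoulli_pmf p) (f e))"
      unfolding u_def gnpk_def C_def
      by (rule expectation_prod_Pi_pmf) (use finC integ in \<open>auto simp: C_def f_def\<close>)
    also have "\<dots> = (\<Prod>e\<in>P. measure_pmf.expectation (bernoulli_pmf p) (f e))"
      by (rule prod.mono_neutral_right[OF finC PC]) (auto simp: f_def[abs_def])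
    also have "\<dots> = (\<Prod>e\<in>P. 2 - p)"
      by (rule prod.cong) (use p in \<open>auto simp: f_def\<close>)
    also have "\<dots> = (2 - p) ^ r"
      using card_image[OF inj] by (simp add: P_def)
    finally show ?thesis .
  qed
  have integu: "integrable (measure_pmf (gnpk r k p)) u"
    unfolding u_def gnpk_def C_def
    by (rule integrable_prod_Pi_pmf) (use finC integ in \<open>auto simp: C_def\<close>)
  have sub: "{E. real (card {yj. yj < r \<and> \<not> adj E (i, xi, yi) (j, xj, yj)}) > s}
      \<subseteq> {E \<in> space (measure_pmf (gnpk r k p)). u E \<ge> 2 powr s}"
  proof safe
    fix E assume a: "real (card {yj. yj < r \<and> \<not> adj E (i, xi, yi) (j, xj, yj)}) > s"
    have "2 powr s \<le> 2 powr real (card {yj. yj < r \<and> \<not> E (\<pi> yj)})"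
      using a by (intro powr_mono) (auto simp: adj_eq)
    also have "\<dots> = u E" by (simp add: u_eq powr_realpow)
    finally show "u E \<ge> 2 powr s" .
  qed simp
  have "measure_pmf.prob (gnpk r k p)
           {E. real (card {yj. yj < r \<and> \<not> adj E (i, xi, yi) (j, xj, yj)}) > s}
        \<le> measure_pmf.prob (gnpk r k p) {E \<in> space (measure_pmf (gnpk r k p)). u E \<ge> 2 powr s}"
    by (rule measure_pmf.finite_measure_mono[OF sub]) simp
  also have "\<dots> \<le> measure_pmf.expectation (gnpk r k p) u / 2 powr s"
    by (rule integral_Markov_inequality_measure[OF integu, where A = UNIV])
       (auto simp: u_def f_def intro!: prod_nonneg)
  finally show ?thesis by (simp add: Eu)
qed

lemma union_bound:
  assumes p: "0 \<le> p" "p \<le> 1"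
  shows "measure_pmf.prob (gnpk r k p) {E. \<not> almost_complete r k s E}
         \<le> real (k * k * r * r * r) * ((2 - p) ^ r / 2 powr s)"
proof -
  define T where "T = {..<k} \<times> {..<k} \<times> {..<r} \<times> {..<r} \<times> {..<r}"
  define B where "B t = (case t of (i, j, xi, yi, xj) \<Rightarrow>
     if i \<noteq> j then {E. real (card {yj. yj < r \<and> \<not> adj E (i, xi, yi) (j, xj, yj)}) > s} else {})" for t
  have finT: "finite T" unfolding T_def by simp
  have cardT: "card T = k * k * r * r * r" unfolding T_def by (simp add: card_cartesian_product)
  have sub: "{E. \<not> almost_complete r k s E} \<subseteq> (\<Union>t\<in>T. B t)"
    by (force simp: almost_complete_def T_def B_def not_le)
  have Bb: "measure_pmf.prob (gnpk r k p) (B t) \<le> (2 - p) ^ r / 2 powr s" if "t \<in> T" for t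
  proof -
    obtain i j xi yi xj where t: "t = (i, j, xi, yi, xj)" by (cases t) auto
    show ?thesis
    proof (cases "i = j")
      case True then show ?thesis using p by (simp add: B_def t)
    next
      case False then show ?thesis using that p
        by (simp add: B_def t T_def tuple_bound)
    qed
  qed
  have "measure_pmf.prob (gnpk r k p) {E. \<not> almost_complete r k s E}
        \<le> measure_pmf.prob (gnpk r k p) (\<Union>t\<in>T. B t)"
    by (rule measure_pmf.finite_measure_mono[OF sub]) simp
  also have "\<dots> \<le> (\<Sum>t\<in>T. measure_pmf.prob (gnpk r k p) (B t))"
    by (rule measure_pmf.finite_measure_subadditive_finite[OF finT]) simp
  also have "\<dots> \<le> (\<Sum>t\<in>T. (2 - p) ^ r / 2 powr s)"
    by (rule sum_mono) (rule Bb)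
  also have "\<dots> = real (k * k * r * r * r) * ((2 - p) ^ r / 2 powr s)"
    by (simp add: cardT)
  finally show ?thesis .
qed

lemma real_bound:
  fixes r kk :: nat and q s :: real
  assumes r: "1 \<le> r" and kk: "1 \<le> kk" and q: "0 \<le> q" "q \<le> 1"
    and s1: "2 * real r * q \<le> s" and s2: "9 * exp 2 * ln (real (kk * r ^ 2)) \<le> s"
  shows "real (kk * kk * r * r * r) * ((1 + q) ^ r / 2 powr s) \<le> 1 / real (r ^ 2)"
proof -
  define K where "K = real (kk * r ^ 2)"
  have "1 \<le> kk * r ^ 2" using r kk by (simp add: Suc_le_eq)
  hence K1: "1 \<le> K" unfolding K_def by (metis of_nat_1 of_nat_mono)
  have lnK: "0 \<le> ln K" using K1 by simp
  have e2: "3 \<le> exp (2::real)" using exp_ge_add_one_self_aux[of 2] by simp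
  have s0: "0 \<le> s" using s2 lnK e2 K_def
    by (smt (verit) mult_nonneg_nonneg)
  have a: "(1 + q) ^ r \<le> exp (q * r)"
  proof -
    have "(1 + q) ^ r \<le> exp q ^ r"
      using q exp_ge_add_one_self_aux[of q] by (intro power_mono) (auto simp: add.commute)
    also have "\<dots> = exp (q * r)" by (simp add: exp_of_nat_mult[symmetric] mult.commute)
    finally show ?thesis .
  qed
  have b: "exp (2 / 3 * s) \<le> 2 powr s"
  proof -
    have "2 powr s = exp (s * ln 2)" by (simp add: powr_def)
    moreover have "2 / 3 * s \<le> s * ln 2" using ln2_ge_two_thirds s0
      by (metis mult.commute mult_left_mono)
    ultimately show ?thesis by simp
  qed
  have c: "(1 + q) ^ r / 2 powr s \<le> exp (- s / 6)"
  proof -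
    have "(1 + q) ^ r / 2 powr s \<le> exp (q * r) / exp (2 / 3 * s)"
      using a b by (intro frac_le) auto
    also have "\<dots> = exp (q * r - 2 / 3 * s)" by (simp add: exp_diff)
    also have "\<dots> \<le> exp (- s / 6)" using s1 by (simp add: algebra_simps)
    finally show ?thesis .
  qed
  have d: "exp (- s / 6) \<le> 1 / K ^ 4"
  proof -
    have "4 * ln K \<le> s / 6"
    proof -
      have "4 * ln K \<le> (9 * exp 2 / 6) * ln K" using e2 lnK
        by (intro mult_right_mono) auto
      thus ?thesis using s2 unfolding K_def by simp
    qed
    hence "exp (- s / 6) \<le> exp (- (4 * ln K))" by simp
    also have "exp (- (4 * ln K)) = 1 / K ^ 4"
    proof -
      have "exp (4 * ln K) = exp (ln K) ^ 4" using exp_of_nat_mult[of 4 "ln K"] by simp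
      also have "\<dots> = K ^ 4" using K1 by simp
      finally show ?thesis by (simp add: exp_minus field_simps)
    qed
    finally show ?thesis .
  qed
  have "real (kk * kk * r * r * r) * ((1 + q) ^ r / 2 powr s) \<le> real (kk * kk * r * r * r) * (1 / K ^ 4)"
    using c d by (intro mult_left_mono) auto
  also have "\<dots> \<le> 1 / real (r ^ 2)"
  proof -
    have "real (kk * kk * r * r * r) * real (r ^ 2) \<le> K ^ 4"
    proof -
      have "kk * kk * r * r * r * r ^ 2 \<le> (kk * r ^ 2) ^ 4"
      proof -
        have "kk * kk * r * r * r * r ^ 2 = (kk * kk) * (r ^ 5)" by (simp add: power_def eval_nat_numeral)
        also have "\<dots> \<le> (kk * kk * (kk * kk)) * (r ^ 5 * r ^ 3)"
          using r kk by (intro mult_mono) (auto simp: one_le_power power_increasing)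
        also have "\<dots> = (kk * r ^ 2) ^ 4" by (simp add: power_mult_distrib eval_nat_numeral)
        finally show ?thesis .
      qed
      hence "real (kk * kk * r * r * r * r ^ 2) \<le> real ((kk * r ^ 2) ^ 4)" by (rule of_nat_mono)
      thus ?thesis unfolding K_def by simp
    qed
    thus ?thesis using K1 r by (simp add: field_simps)
  qed
  finally show ?thesis .
qed

lemma step_bound:
  fixes k :: "nat \<Rightarrow> nat" and p :: "nat \<Rightarrow> real"
  assumes k1: "\<forall>n. 1 \<le> k n" and p01: "\<forall>n. 0 \<le> p n \<and> p n \<le> 1"
  shows "1 - (1/4) ^ m \<le> (let n = (4::nat) ^ m;
                 s = max (2 * sqrt (real n) * (1 - p n)) (9 * exp 2 * ln (real (k n * n)))
             in measure_pmf.prob (gnpk (2 ^ m) (k n) (p n)) {E. almost_complete (2 ^ m) (k n) s E})"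
proof -
  define n where "n = (4::nat) ^ m"
  define r where "r = (2::nat) ^ m"
  have nr: "n = r ^ 2" unfolding n_def r_def
    by (metis power_mult_distrib power2_eq_square num_double numeral_times_numeral power_commutes)
  have sq: "sqrt (real n) = real r" unfolding nr by simp
  define s where "s = max (2 * sqrt (real n) * (1 - p n)) (9 * exp 2 * ln (real (k n * n)))"
  define A where "A = {E. almost_complete r (k n) s E}"
  have r1: "1 \<le> r" unfolding r_def by simp
  have "measure_pmf.prob (gnpk r (k n) (p n)) (UNIV - A)
        \<le> real (k n * k n * r * r * r) * ((2 - p n) ^ r / 2 powr s)"
  proof -
    have "UNIV - A = {E. \<not> almost_complete r (k n) s E}" unfolding A_def by auto
    thus ?thesis using union_bound[of "p n" r "k n" s] p01 by simp
  qed
  also have "\<dots> \<le> 1 / real (r ^ 2)"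
  proof -
    have "real (k n * k n * r * r * r) * ((1 + (1 - p n)) ^ r / 2 powr s) \<le> 1 / real (r ^ 2)"
      by (rule real_bound) (use r1 k1 p01 in \<open>auto simp: s_def sq nr\<close>)
    thus ?thesis by simp
  qed
  also have "\<dots> = (1/4) ^ m" unfolding nr[symmetric] n_def by (simp add: power_one_over)
  finally have "measure_pmf.prob (gnpk r (k n) (p n)) (UNIV - A) \<le> (1/4) ^ m" .
  moreover have "measure_pmf.prob (gnpk r (k n) (p n)) (UNIV - A) = 1 - measure_pmf.prob (gnpk r (k n) (p n)) A"
    using measure_pmf.prob_compl[of A "gnpk r (k n) (p n)"] by simp
  ultimately show ?thesis unfolding Let_def n_def[symmetric] r_def[symmetric] s_def[symmetric] A_def by simp
qed

theorem lemma3p2: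
  fixes k :: "nat \<Rightarrow> nat" and p :: "nat \<Rightarrow> real"
  assumes "\<forall>n. 1 \<le> k n"
    and "\<forall>n. 0 \<le> p n \<and> p n \<le> 1"
  shows "(\<lambda>m. let n = (4::nat) ^ m;
                 s = max (2 * sqrt (real n) * (1 - p n)) (9 * exp 2 * ln (real (k n * n)))
             in measure_pmf.prob (gnpk (2 ^ m) (k n) (p n)) {E. almost_complete (2 ^ m) (k n) s E})
         \<longlonglongrightarrow> 1"
proof (rule real_tendsto_sandwich)
  show "\<forall>\<^sub>F m in sequentially. 1 - (1/4) ^ m \<le> (let n = (4::nat) ^ m;
                 s = max (2 * sqrt (real n) * (1 - p n)) (9 * exp 2 * ln (real (k n * n)))
             in measure_pmf.prob (gnpk (2 ^ m) (k n) (p n)) {E. almost_complete (2 ^ m) (k n) s E})"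
    using step_bound[OF assms] by simp
  show "\<forall>\<^sub>F m in sequentially. (let n = (4::nat) ^ m;
                 s = max (2 * sqrt (real n) * (1 - p n)) (9 * exp 2 * ln (real (k n * n)))
             in measure_pmf.prob (gnpk (2 ^ m) (k n) (p n)) {E. almost_complete (2 ^ m) (k n) s E}) \<le> 1"
    by (simp add: Let_def)
  show "(\<lambda>m. 1 - (1/4::real) ^ m) \<longlonglongrightarrow> 1"
    using tendsto_diff[OF tendsto_const LIMSEQ_power_zero[of "1/4::real"]] by simp
  show "(\<lambda>m. 1::real) \<longlonglongrightarrow> 1" by simp
qed

end
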